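(* Let $\kappa$ be an algebraically closed field of characteristic zero, complete for a non-trivial non-Archimedean absolute value. Let $a,b\in\kappa$ with $a\ne0$ and $|a|\le1$, let $L(z)=az+b$, let $f\in\mathcal{A}(\kappa)$ be an entire function not identically zero, and let $m$ be a positive integer. Then for every $r>|b|/|a|$, $$m\!\left(r,\frac{f\circ L}{f}\right)=0,\qquad m\!\left(r,\frac{\Delta_L^mf}{f}\right)=0.$$
   Context: $\mathcal{A}(\kappa)$ is the ring of entire functions over $\kappa$ (power series converging on all of $\kappa$). For entire $g=\sum a_nz^n$, $\mu(r,g)=\max_n|a_n|r^n$; for $g/h$, $\mu(r,g/h)=\mu(r,g)/\mu(r,h)$; $m(r,F)=\log^+\mu(r,F)=\max\{0,\log\mu(r,F)\}$. $\Delta_Lf=f\circ L-f$ and $\Delta_L^mf=\Delta_L(\Delta_L^{m-1}f)$. *)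

theory Defs
  imports Complex_Main "HOL-Computational_Algebra.Polynomial"
begin

definition v_tendsto :: "('a::field \<Rightarrow> real) \<Rightarrow> (nat \<Rightarrow> 'a) \<Rightarrow> 'a \<Rightarrow> bool" where
  "v_tendsto absv x l \<longleftrightarrow> (\<forall>\<epsilon>>0. \<exists>N. \<forall>n\<ge>N. absv (x n - l) < \<epsilon>)"

definition v_cauchy :: "('a::field \<Rightarrow> real) \<Rightarrow> (nat \<Rightarrow> 'a) \<Rightarrow> bool" where
  "v_cauchy absv x \<longleftrightarrow> (\<forall>\<epsilon>>0. \<exists>N. \<forall>m\<ge>N. \<forall>n\<ge>N. absv (x m - x n) < \<epsilon>)"

definition nonarch_abs :: "('a::field \<Rightarrow> real) \<Rightarrow> bool" where
  "nonarch_abs absv \<longleftrightarrow>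
     (\<forall>x. absv x \<ge> 0) \<and> (\<forall>x. absv x = 0 \<longleftrightarrow> x = 0) \<and>
     (\<forall>x y. absv (x * y) = absv x * absv y) \<and>
     (\<forall>x y. absv (x + y) \<le> max (absv x) (absv y))"

definition ac_complete_nonarch_field :: "('a::field_char_0 \<Rightarrow> real) \<Rightarrow> bool" where
  "ac_complete_nonarch_field absv \<longleftrightarrow>
     nonarch_abs absv \<and>
     (\<exists>x. absv x \<noteq> 0 \<and> absv x \<noteq> 1) \<and>
     (\<forall>x. v_cauchy absv x \<longrightarrow> (\<exists>l. v_tendsto absv x l)) \<and>
     (\<forall>p::'a poly. degree p > 0 \<longrightarrow> (\<exists>z. poly p z = 0))"

definition entire_coeffs :: "('a::field \<Rightarrow> real) \<Rightarrow> (nat \<Rightarrow> 'a) \<Rightarrow> ('a \<Rightarrow> 'a) \<Rightarrow> bool" where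
  "entire_coeffs absv c g \<longleftrightarrow>
     (\<forall>r>0. (\<lambda>n. absv (c n) * r ^ n) \<longlonglongrightarrow> 0) \<and>
     (\<forall>z. v_tendsto absv (\<lambda>n. \<Sum>k<n. c k * z ^ k) (g z))"

definition is_entire :: "('a::field \<Rightarrow> real) \<Rightarrow> ('a \<Rightarrow> 'a) \<Rightarrow> bool" where
  "is_entire absv g \<longleftrightarrow> (\<exists>c. entire_coeffs absv c g)"

definition mu :: "('a::field \<Rightarrow> real) \<Rightarrow> ('a \<Rightarrow> 'a) \<Rightarrow> real \<Rightarrow> real" where
  "mu absv g r = (let c = (THE c. entire_coeffs absv c g) in
                  Sup (range (\<lambda>n. absv (c n) * r ^ n)))"

definition m_quot :: "('a::field \<Rightarrow> real) \<Rightarrow> real \<Rightarrow> ('a \<Rightarrow> 'a) \<Rightarrow> ('a \<Rightarrow> 'a) \<Rightarrow> real" where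
  "m_quot absv r g h = max 0 (ln (mu absv g r / mu absv h r))"

definition Delta :: "('a \<Rightarrow> 'a) \<Rightarrow> ('a::ab_group_add \<Rightarrow> 'a) \<Rightarrow> 'a \<Rightarrow> 'a" where
  "Delta L f = (\<lambda>z. f (L z) - f z)"

definition Delta_pow :: "('a \<Rightarrow> 'a) \<Rightarrow> nat \<Rightarrow> ('a::ab_group_add \<Rightarrow> 'a) \<Rightarrow> 'a \<Rightarrow> 'a" where
  "Delta_pow L m f = (Delta L ^^ m) f"

end

theory Submission
  imports Defs
begin


lemma sum_split_diff:
  fixes f :: "nat \<Rightarrow> 'a::ab_group_add"
  assumes "N \<le> M" shows "sum f {..<M} - sum f {..<N} = sum f {N..<M}"
proof -
  have "sum f {..<M} = sum f {0..<N} + sum f {N..<M}"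
    using assms by (simp add: lessThan_atLeast0 sum.atLeastLessThan_concat)
  then show ?thesis by (simp add: lessThan_atLeast0)
qed

locale na =
  fixes absv :: "'a::field \<Rightarrow> real"
  assumes na: "nonarch_abs absv"
begin

lemma nonneg[simp]: "absv x \<ge> 0" using na by (simp add: nonarch_abs_def)
lemma zero_iff[simp]: "absv x = 0 \<longleftrightarrow> x = 0" using na by (simp add: nonarch_abs_def)
lemma mult: "absv (x*y) = absv x * absv y" using na by (simp add: nonarch_abs_def)
lemma ultra: "absv (x+y) \<le> max (absv x) (absv y)" using na by (simp add: nonarch_abs_def)

lemma one[simp]: "absv 1 = 1"
proof -
  have "absv 1 = absv 1 * absv 1" using mult[of 1 1] by simp
  moreover have "absv 1 \<noteq> 0" by simp
  ultimately show ?thesis by simp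
qed

lemma zero[simp]: "absv 0 = 0" by simp

lemma minus[simp]: "absv (-x) = absv x"
proof -
  have "absv (-1) * absv (-1) = 1" using mult[of "-1" "-1"] by simp
  then have "(absv (-1) - 1) * (absv (-1) + 1) = 0" by (simp add: algebra_simps)
  moreover have "absv (-1) + 1 > 0" using nonneg[of "-1"] by linarith
  ultimately have "absv (-1) = 1" by simp
  then show ?thesis using mult[of "-1" x] by simp
qed

lemma ultra_diff: "absv (x-y) \<le> max (absv x) (absv y)"
  using ultra[of x "-y"] by simp

lemma diff_comm: "absv (x-y) = absv (y-x)"
  by (metis minus minus_diff_eq)

lemma pow: "absv (x^n) = absv x ^ n"
  by (induction n) (simp_all add: mult)

lemma of_nat_le: "absv (of_nat n) \<le> 1"
proof (induction n)
  case 0 then show ?case by simp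
next
  case (Suc n)
  have "absv (of_nat (Suc n)) = absv (of_nat n + 1)" by (simp add: add.commute)
  also have "\<dots> \<le> max (absv (of_nat n)) (absv 1)" by (rule ultra)
  finally show ?case using Suc by simp
qed

lemma add_le: "absv (x + y) \<le> absv x + absv y"
  using ultra[of x y] nonneg[of x] nonneg[of y] by linarith

lemma sum_le:
  assumes "finite S" "0 \<le> B" "\<And>i. i \<in> S \<Longrightarrow> absv (f i) \<le> B"
  shows "absv (sum f S) \<le> B"
  using assms
proof (induction S rule: finite_induct)
  case empty then show ?case by simp
next
  case (insert x F)
  have "absv (sum f (insert x F)) = absv (f x + sum f F)" using insert by simp
  also have "\<dots> \<le> max (absv (f x)) (absv (sum f F))" by (rule ultra)
  moreover have "absv (f x) \<le> B" using insert.prems by simp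
  moreover have "absv (sum f F) \<le> B" using insert by simp
  ultimately show ?case by simp
qed

lemma tendsto_cmult_diff:
  assumes "v_tendsto absv x l"
  shows "v_tendsto absv (\<lambda>n. c * (x n - e)) (c * (l - e))"
  unfolding v_tendsto_def
proof (intro allI impI)
  fix \<epsilon> :: real assume e: "\<epsilon> > 0"
  show "\<exists>N. \<forall>n\<ge>N. absv (c * (x n - e) - c * (l - e)) < \<epsilon>"
  proof (cases "c = 0")
    case True then show ?thesis using e by simp
  next
    case False
    then have cp: "absv c > 0" using nonneg[of c] zero_iff[of c] by linarith
    obtain N where N: "\<forall>n\<ge>N. absv (x n - l) < \<epsilon> / absv c"
      using assms cp e unfolding v_tendsto_def by (meson divide_pos_pos)
    have "\<forall>n\<ge>N. absv (c * (x n - e) - c * (l - e)) < \<epsilon>"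
    proof (intro allI impI)
      fix n assume "n \<ge> N"
      have "c * (x n - e) - c * (l - e) = c * (x n - l)" by (simp add: algebra_simps)
      then have "absv (c * (x n - e) - c * (l - e)) = absv c * absv (x n - l)" by (simp add: mult)
      also have "\<dots> < absv c * (\<epsilon> / absv c)"
      proof -
        have h: "absv (x n - l) < \<epsilon> / absv c" using N \<open>n \<ge> N\<close> by simp
        show ?thesis using mult_strict_left_mono[OF h cp] .
      qed
      also have "\<dots> = \<epsilon>" using cp False by simp
      finally show "absv (c * (x n - e) - c * (l - e)) < \<epsilon>" .
    qed
    then show ?thesis by blast
  qed
qed

lemma tendsto_diff:
  assumes "v_tendsto absv x l" "v_tendsto absv y l'"
  shows "v_tendsto absv (\<lambda>n. x n - y n) (l - l')"
  unfolding v_tendsto_def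
proof (intro allI impI)
  fix \<epsilon> :: real assume e: "\<epsilon> > 0"
  obtain N1 where N1: "\<forall>n\<ge>N1. absv (x n - l) < \<epsilon>" using assms(1) e unfolding v_tendsto_def by blast
  obtain N2 where N2: "\<forall>n\<ge>N2. absv (y n - l') < \<epsilon>" using assms(2) e unfolding v_tendsto_def by blast
  have "\<forall>n\<ge>max N1 N2. absv (x n - y n - (l - l')) < \<epsilon>"
  proof (intro allI impI)
    fix n assume "n \<ge> max N1 N2"
    have "x n - y n - (l - l') = (x n - l) - (y n - l')" by simp
    then have "absv (x n - y n - (l - l')) \<le> max (absv (x n - l)) (absv (y n - l'))"
      using ultra_diff by metis
    moreover have "absv (x n - l) < \<epsilon>" "absv (y n - l') < \<epsilon>" using N1 N2 \<open>n \<ge> max N1 N2\<close> by auto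
    ultimately show "absv (x n - y n - (l - l')) < \<epsilon>" by (auto simp: max_def split: if_splits)
  qed
  then show "\<exists>N. \<forall>n\<ge>N. absv (x n - y n - (l - l')) < \<epsilon>" by blast
qed

lemma tendsto_close:
  assumes "\<And>\<epsilon>. \<epsilon> > 0 \<Longrightarrow> \<exists>N. \<forall>n\<ge>N. absv (x n - y n) \<le> \<epsilon>"
    and "v_tendsto absv y l"
  shows "v_tendsto absv x l"
  unfolding v_tendsto_def
proof (intro allI impI)
  fix \<epsilon> :: real assume e: "\<epsilon> > 0"
  obtain N1 where N1: "\<forall>n\<ge>N1. absv (x n - y n) \<le> \<epsilon>/2" using assms(1)[of "\<epsilon>/2"] e by auto
  obtain N2 where N2: "\<forall>n\<ge>N2. absv (y n - l) < \<epsilon>" using assms(2) e unfolding v_tendsto_def by blast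
  have "\<forall>n\<ge>max N1 N2. absv (x n - l) < \<epsilon>"
  proof (intro allI impI)
    fix n assume "n \<ge> max N1 N2"
    have "x n - l = (x n - y n) + (y n - l)" by simp
    then have "absv (x n - l) \<le> max (absv (x n - y n)) (absv (y n - l))"
      using ultra by metis
    then show "absv (x n - l) < \<epsilon>" using N1 N2 \<open>n \<ge> max N1 N2\<close> e by fastforce
  qed
  then show "\<exists>N. \<forall>n\<ge>N. absv (x n - l) < \<epsilon>" by blast
qed

lemma lim_bound:
  assumes "v_tendsto absv x l" "\<And>n. n \<ge> N \<Longrightarrow> absv (x n) \<le> B"
  shows "absv l \<le> B"
proof (rule ccontr)
  assume "\<not> absv l \<le> B"
  then have lt: "B < absv l" by simp
  have B0: "0 \<le> B" using assms(2)[of N] nonneg[of "x N"] by linarith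
  obtain M where M: "\<forall>n\<ge>M. absv (x n - l) < absv l" using assms(1) lt B0 unfolding v_tendsto_def by force
  define n where "n = max N M"
  have "l = x n - (x n - l)" by simp
  then have "absv l \<le> max (absv (x n)) (absv (x n - l))" using ultra_diff by metis
  moreover have "absv (x n) \<le> B" using assms(2) n_def by simp
  moreover have "absv (x n - l) < absv l" using M n_def by simp
  ultimately show False using lt by linarith
qed

lemma series_bound:
  assumes "v_tendsto absv (\<lambda>N. \<Sum>n<N. t n) l" "0 \<le> B" "\<And>n. absv (t n) \<le> B"
  shows "absv l \<le> B"
  using assms by (intro lim_bound[OF assms(1), of 0]) (auto intro: sum_le)

end



locale nac = na +
  assumes complete: "\<And>x. v_cauchy absv x \<Longrightarrow> \<exists>l. v_tendsto absv x l"
begin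

lemma series_conv:
  assumes t0: "(\<lambda>n. absv (t n)) \<longlonglongrightarrow> 0"
  shows "\<exists>l. v_tendsto absv (\<lambda>N. \<Sum>n<N. t n) l"
proof (rule complete)
  show "v_cauchy absv (\<lambda>N. \<Sum>n<N. t n)"
    unfolding v_cauchy_def
  proof (intro allI impI)
    fix \<epsilon> :: real assume e: "\<epsilon> > 0"
    then have "\<epsilon>/2 > 0" by simp
    then obtain N where N: "\<forall>n\<ge>N. norm (absv (t n) - 0) < \<epsilon>/2"
      using LIMSEQ_D[OF t0 \<open>\<epsilon>/2 > 0\<close>] by blast
    have key: "absv ((\<Sum>n<q. t n) - (\<Sum>n<p. t n)) \<le> \<epsilon>/2" if "N \<le> p" "p \<le> q" for p q
    proof -
      have "(\<Sum>n<q. t n) - (\<Sum>n<p. t n) = (\<Sum>n\<in>{p..<q}. t n)" using sum_split_diff[OF \<open>p \<le> q\<close>] .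
      moreover have "absv (\<Sum>n\<in>{p..<q}. t n) \<le> \<epsilon>/2"
        using N that e by (intro sum_le) (auto, meson le_trans less_imp_le)
      ultimately show ?thesis by simp
    qed
    have "\<forall>m\<ge>N. \<forall>n\<ge>N. absv ((\<Sum>k<m. t k) - (\<Sum>k<n. t k)) < \<epsilon>"
    proof (intro allI impI)
      fix m n assume "N \<le> m" "N \<le> n"
      show "absv ((\<Sum>k<m. t k) - (\<Sum>k<n. t k)) < \<epsilon>"
      proof (cases "n \<le> m")
        case True then show ?thesis using key[of n m] \<open>N \<le> n\<close> e by linarith
      next
        case False then show ?thesis using key[of m n] \<open>N \<le> m\<close> e diff_comm by fastforce
      qed
    qed
    then show "\<exists>N. \<forall>m\<ge>N. \<forall>n\<ge>N. absv ((\<Sum>k<m. t k) - (\<Sum>k<n. t k)) < \<epsilon>" by blast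
  qed
qed

end



definition scoef :: "'a::field \<Rightarrow> 'a \<Rightarrow> (nat \<Rightarrow> 'a) \<Rightarrow> nat \<Rightarrow> nat \<Rightarrow> 'a" where
  "scoef a b c k n = c n * of_nat (n choose k) * a ^ k * b ^ (n - k)"

context na begin

lemma max_nonneg[simp]: "0 \<le> max t (absv y)" by (simp add: le_max_iff_disj)

lemma c_tendsto:
  assumes ec: "entire_coeffs absv c g" and R: "R \<ge> 0"
  shows "(\<lambda>n. absv (c n) * R^n) \<longlonglongrightarrow> 0"
proof (cases "R = 0")
  case True
  have "(\<lambda>n. absv (c (Suc n)) * R^(Suc n)) \<longlonglongrightarrow> 0" using True by simp
  then show ?thesis by (rule LIMSEQ_imp_Suc)
next
  case False
  then show ?thesis using ec R unfolding entire_coeffs_def by simp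
qed

lemma s_bound:
  assumes "0 \<le> \<rho>"
  shows "absv (scoef a b c k n) * \<rho>^k \<le> absv (c n) * (max (absv a * \<rho>) (absv b))^n"
proof (cases "k \<le> n")
  case False
  then show ?thesis by (simp add: scoef_def binomial_eq_0)
next
  case True
  let ?R = "max (absv a * \<rho>) (absv b)"
  have "absv (scoef a b c k n) = absv (c n) * absv (of_nat (n choose k)) * absv a ^ k * absv b ^ (n-k)"
    by (simp add: scoef_def mult pow)
  also have "\<dots> \<le> absv (c n) * 1 * absv a ^ k * absv b ^ (n-k)"
    by (intro mult_right_mono mult_left_mono of_nat_le) auto
  finally have "absv (scoef a b c k n) * \<rho>^k \<le> (absv (c n) * 1 * absv a ^ k * absv b ^ (n-k)) * \<rho>^k"
    using assms by (intro mult_right_mono) auto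
  also have "\<dots> = absv (c n) * ((absv a * \<rho>)^k * absv b ^ (n-k))"
    by (simp add: power_mult_distrib mult_ac)
  finally have 1: "absv (scoef a b c k n) * \<rho>^k \<le> absv (c n) * ((absv a * \<rho>)^k * absv b ^ (n-k))" .
  have "(absv a * \<rho>)^k * absv b ^ (n-k) \<le> ?R^k * ?R^(n-k)"
    using assms by (intro mult_mono power_mono) auto
  also have "\<dots> = ?R^n" using True by (simp add: power_add[symmetric])
  finally have "(absv a * \<rho>)^k * absv b ^ (n-k) \<le> ?R^n" .
  then show ?thesis using 1 by (meson mult_left_mono nonneg order_trans)
qed

end

context nac begin

lemma compose:
  assumes ec: "entire_coeffs absv c g"
  obtains d where "entire_coeffs absv d (\<lambda>z. g (a*z+b))"
     "\<And>k. v_tendsto absv (\<lambda>N. \<Sum>n<N. scoef a b c k n) (d k)"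
proof -
  have "\<forall>k. \<exists>l. v_tendsto absv (\<lambda>N. \<Sum>n<N. scoef a b c k n) l"
  proof
    fix k
    show "\<exists>l. v_tendsto absv (\<lambda>N. \<Sum>n<N. scoef a b c k n) l"
    proof (rule series_conv)
      let ?R = "max (absv a) (absv b)"
      have u: "(\<lambda>n. absv (c n) * ?R^n) \<longlonglongrightarrow> 0" by (rule c_tendsto[OF ec]) (simp add: le_max_iff_disj)
      have b: "\<And>n. absv (scoef a b c k n) \<le> absv (c n) * ?R^n"
        using s_bound[of 1 a b c k] by simp
      show "(\<lambda>n. absv (scoef a b c k n)) \<longlonglongrightarrow> 0"
        by (rule tendsto_sandwich[of "\<lambda>_. 0" _ sequentially "\<lambda>n. absv (c n) * ?R^n"])
           (use u b in auto)
    qed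
  qed
  then obtain d where d: "\<And>k. v_tendsto absv (\<lambda>N. \<Sum>n<N. scoef a b c k n) (d k)" by metis
  have p1: "\<forall>\<rho>>0. (\<lambda>k. absv (d k) * \<rho>^k) \<longlonglongrightarrow> 0"
  proof (intro allI impI)
    fix \<rho>::real assume rp: "\<rho> > 0"
    let ?R = "max (absv a * \<rho>) (absv b)"
    have u: "(\<lambda>n. absv (c n) * ?R^n) \<longlonglongrightarrow> 0" by (rule c_tendsto[OF ec]) (simp add: le_max_iff_disj)
    show "(\<lambda>k. absv (d k) * \<rho>^k) \<longlonglongrightarrow> 0"
    proof (rule LIMSEQ_I)
      fix \<epsilon>::real assume ep: "\<epsilon> > 0"
      then obtain N where N: "\<forall>n\<ge>N. norm (absv (c n) * ?R^n - 0) < \<epsilon>/2"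
        using LIMSEQ_D[OF u] half_gt_zero by blast
      have N': "absv (c n) * ?R^n < \<epsilon>/2" if "n \<ge> N" for n
        using N that by (simp add: abs_of_nonneg)
      have "\<forall>k\<ge>N. norm (absv (d k) * \<rho>^k - 0) < \<epsilon>"
      proof (intro allI impI)
        fix k assume kN: "k \<ge> N"
        have "absv (d k) \<le> (\<epsilon>/2) / \<rho>^k"
        proof (rule series_bound[OF d[of k]])
          show "0 \<le> \<epsilon>/2/\<rho>^k" using ep rp by simp
          fix n
          show "absv (scoef a b c k n) \<le> \<epsilon>/2/\<rho>^k"
          proof (cases "n < k")
            case True then show ?thesis using ep rp by (simp add: scoef_def binomial_eq_0)
          next
            case False
            then have "absv (c n) * ?R^n < \<epsilon>/2" using N' kN by simp
            then have "absv (scoef a b c k n) * \<rho>^k \<le> \<epsilon>/2"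
              using s_bound[of \<rho> a b c k n] rp by simp
            then show ?thesis using rp by (simp add: pos_le_divide_eq)
          qed
        qed
        then have "absv (d k) * \<rho>^k \<le> \<epsilon>/2" using rp by (simp add: pos_le_divide_eq)
        then show "norm (absv (d k) * \<rho>^k - 0) < \<epsilon>" using ep rp by (simp add: abs_of_nonneg)
      qed
      then show "\<exists>no. \<forall>n\<ge>no. norm (absv (d n) * \<rho>^n - 0) < \<epsilon>" by blast
    qed
  qed
  have p2: "\<forall>z. v_tendsto absv (\<lambda>N. \<Sum>k<N. d k * z^k) (g (a*z+b))"
  proof
    fix z
    let ?w = "a*z+b"
    have hg: "v_tendsto absv (\<lambda>N. \<Sum>n<N. c n * ?w^n) (g ?w)"
      using ec by (simp add: entire_coeffs_def)
    have eq: "(\<Sum>n<N. c n * ?w^n) = (\<Sum>k<N. z^k * (\<Sum>n<N. scoef a b c k n))" for N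
    proof -
      have "(\<Sum>n<N. c n * ?w^n) = (\<Sum>n<N. \<Sum>k<N. z^k * scoef a b c k n)"
      proof (rule sum.cong[OF refl])
        fix n assume nN: "n \<in> {..<N}"
        have "c n * ?w^n = c n * (\<Sum>k\<le>n. of_nat (n choose k) * (a*z)^k * b^(n-k))"
          by (simp add: binomial_ring)
        also have "\<dots> = (\<Sum>k\<le>n. z^k * scoef a b c k n)"
          unfolding sum_distrib_left
          by (rule sum.cong) (simp_all add: scoef_def power_mult_distrib mult_ac)
        also have "\<dots> = (\<Sum>k<N. z^k * scoef a b c k n)"
          by (rule sum.mono_neutral_left) (use nN in \<open>auto simp: scoef_def\<close>, metis binomial_eq_0 not_le of_nat_0)
        finally show "c n * ?w^n = (\<Sum>k<N. z^k * scoef a b c k n)" .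
      qed
      also have "\<dots> = (\<Sum>k<N. \<Sum>n<N. z^k * scoef a b c k n)" by (rule sum.swap)
      also have "\<dots> = (\<Sum>k<N. z^k * (\<Sum>n<N. scoef a b c k n))" by (simp add: sum_distrib_left)
      finally show ?thesis .
    qed
    show "v_tendsto absv (\<lambda>N. \<Sum>k<N. d k * z^k) (g ?w)"
    proof (rule tendsto_close[OF _ hg])
      fix \<epsilon>::real assume ep: "\<epsilon>>0"
      let ?R = "max (absv a * absv z) (absv b)"
      have u: "(\<lambda>n. absv (c n) * ?R^n) \<longlonglongrightarrow> 0" by (rule c_tendsto[OF ec]) (simp add: le_max_iff_disj)
      obtain N0 where N0: "\<forall>n\<ge>N0. norm (absv (c n) * ?R^n - 0) < \<epsilon>"
        using LIMSEQ_D[OF u ep] by blast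
      have N0': "absv (c n) * ?R^n \<le> \<epsilon>" if "n \<ge> N0" for n
        using N0 that by (simp add: less_imp_le abs_of_nonneg)
      have "\<forall>N\<ge>N0. absv ((\<Sum>k<N. d k * z^k) - (\<Sum>n<N. c n * ?w^n)) \<le> \<epsilon>"
      proof (intro allI impI)
        fix N assume NN0: "N \<ge> N0"
        have "(\<Sum>k<N. d k * z^k) - (\<Sum>n<N. c n * ?w^n)
              = (\<Sum>k<N. d k * z^k - z^k * (\<Sum>n<N. scoef a b c k n))"
          by (simp add: eq sum_subtractf)
        also have "\<dots> = (\<Sum>k<N. z^k * (d k - (\<Sum>n<N. scoef a b c k n)))"
          by (rule sum.cong) (simp_all add: right_diff_distrib mult.commute)
        also have "absv \<dots> \<le> \<epsilon>"
        proof (rule sum_le)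
          show "finite {..<N}" "0 \<le> \<epsilon>" using ep by auto
          fix k assume "k \<in> {..<N}"
          show "absv (z^k * (d k - (\<Sum>n<N. scoef a b c k n))) \<le> \<epsilon>"
          proof (rule lim_bound[OF tendsto_cmult_diff[OF d[of k], of "z^k" "\<Sum>n<N. scoef a b c k n"], of N])
            fix M assume NM: "M \<ge> N"
            have "z^k * ((\<Sum>n<M. scoef a b c k n) - (\<Sum>n<N. scoef a b c k n))
                  = (\<Sum>n\<in>{N..<M}. z^k * scoef a b c k n)"
              by (simp add: sum_split_diff[OF NM, of "scoef a b c k"] sum_distrib_left)
            moreover have "absv (\<Sum>n\<in>{N..<M}. z^k * scoef a b c k n) \<le> \<epsilon>"
            proof (rule sum_le)
              show "finite {N..<M}" "0 \<le> \<epsilon>" using ep by auto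
              fix n assume "n \<in> {N..<M}"
              then have nN0: "n \<ge> N0" using NN0 by simp
              have "absv (z^k * scoef a b c k n) = absv (scoef a b c k n) * absv z ^k"
                by (simp add: mult pow)
              also have "\<dots> \<le> absv (c n) * ?R^n" using s_bound[of "absv z" a b c k n] by simp
              also have "\<dots> \<le> \<epsilon>" using N0' nN0 by simp
              finally show "absv (z^k * scoef a b c k n) \<le> \<epsilon>" .
            qed
            ultimately show "absv (z^k * ((\<Sum>n<M. scoef a b c k n) - (\<Sum>n<N. scoef a b c k n))) \<le> \<epsilon>"
              by simp
          qed
        qed
        finally show "absv ((\<Sum>k<N. d k * z^k) - (\<Sum>n<N. c n * ?w^n)) \<le> \<epsilon>" .
      qed
      then show "\<exists>N. \<forall>n\<ge>N. absv ((\<Sum>k<n. d k * z^k) - (\<Sum>n<n. c n * ?w^n)) \<le> \<epsilon>" by blast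
    qed
  qed
  show thesis
    by (rule that[of d]) (use p1 p2 d in \<open>auto simp: entire_coeffs_def\<close>)
qed

end



context na begin

lemma coeff_bound:
  assumes a1: "absv a \<le> 1" and r: "0 < r" and br: "absv b \<le> r"
    and cB: "\<And>n. absv (c n) * r^n \<le> B"
    and dk: "v_tendsto absv (\<lambda>N. \<Sum>n<N. scoef a b c k n) dk"
  shows "absv dk * r^k \<le> B"
proof -
  have "absv (c 0) \<le> B" using cB[of 0] by simp
  then have B0: "0 \<le> B" using nonneg[of "c 0"] by linarith
  have "absv dk \<le> B / r^k"
  proof (rule series_bound[OF dk])
    show "0 \<le> B / r^k" using B0 r by simp
    fix n
    let ?R = "max (absv a * r) (absv b)"
    have Rr: "?R \<le> r" using a1 r br mult_right_mono[OF a1, of r] by auto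
    have "absv (scoef a b c k n) * r^k \<le> absv (c n) * ?R^n"
      using s_bound[of r a b c k n] r by simp
    also have "\<dots> \<le> absv (c n) * r^n"
      by (intro mult_left_mono power_mono Rr) auto
    also have "\<dots> \<le> B" by (rule cB)
    finally show "absv (scoef a b c k n) \<le> B / r^k" using r by (simp add: pos_le_divide_eq)
  qed
  then show ?thesis using r by (simp add: pos_le_divide_eq)
qed

lemma delta_coeffs:
  assumes ec: "entire_coeffs absv c g" and ed: "entire_coeffs absv d (\<lambda>z. g (a*z+b))"
  shows "entire_coeffs absv (\<lambda>k. d k - c k) (Delta (\<lambda>z. a*z+b) g)"
  unfolding entire_coeffs_def
proof (intro conjI allI impI)
  fix \<rho> :: real assume rp: "\<rho> > 0"
  have t1: "(\<lambda>k. absv (d k) * \<rho>^k) \<longlonglongrightarrow> 0" using ed rp by (simp add: entire_coeffs_def)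
  have t2: "(\<lambda>k. absv (c k) * \<rho>^k) \<longlonglongrightarrow> 0" using ec rp by (simp add: entire_coeffs_def)
  have t: "(\<lambda>k. absv (d k) * \<rho>^k + absv (c k) * \<rho>^k) \<longlonglongrightarrow> 0"
    using tendsto_add[OF t1 t2] by simp
  have le: "absv (d k - c k) * \<rho>^k \<le> absv (d k) * \<rho>^k + absv (c k) * \<rho>^k" for k
  proof -
    have "absv (d k - c k) \<le> absv (d k) + absv (c k)"
      using ultra_diff[of "d k" "c k"] nonneg[of "d k"] nonneg[of "c k"] by linarith
    then show ?thesis using rp by (simp add: distrib_right[symmetric] mult_right_mono)
  qed
  show "(\<lambda>k. absv (d k - c k) * \<rho>^k) \<longlonglongrightarrow> 0"
    by (rule tendsto_sandwich[of "\<lambda>_. 0" _ sequentially "\<lambda>k. absv (d k) * \<rho>^k + absv (c k) * \<rho>^k"])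
       (use t le rp in auto)
next
  fix z
  have h1: "v_tendsto absv (\<lambda>N. \<Sum>k<N. d k * z^k) (g (a*z+b))" using ed by (simp add: entire_coeffs_def)
  have h2: "v_tendsto absv (\<lambda>N. \<Sum>k<N. c k * z^k) (g z)" using ec by (simp add: entire_coeffs_def)
  have "(\<lambda>N. \<Sum>k<N. (d k - c k) * z^k) = (\<lambda>N. (\<Sum>k<N. d k * z^k) - (\<Sum>k<N. c k * z^k))"
    by (simp add: sum_subtractf left_diff_distrib)
  then show "v_tendsto absv (\<lambda>N. \<Sum>k<N. (d k - c k) * z^k) (Delta (\<lambda>z. a*z+b) g z)"
    using tendsto_diff[OF h1 h2] by (simp add: Delta_def)
qed

end

locale nacn = nac +
  assumes nontriv: "\<exists>x. absv x \<noteq> 0 \<and> absv x \<noteq> 1"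
begin

lemma small:
  assumes "\<delta> > 0" shows "\<exists>z. z \<noteq> 0 \<and> absv z < \<delta>"
proof -
  obtain x where x: "absv x \<noteq> 0" "absv x \<noteq> 1" using nontriv by blast
  have "\<exists>y. y \<noteq> 0 \<and> absv y < 1"
  proof (cases "absv x < 1")
    case True then show ?thesis using x by (intro exI[of _ x]) auto
  next
    case False
    then have gt: "absv x > 1" using x by simp
    have "absv x * absv (inverse x) = 1" using x mult[of x "inverse x"] by simp
    then have "absv (inverse x) = 1 / absv x" using gt by (simp add: eq_divide_eq mult.commute)
    then have "absv (inverse x) < 1" using gt by simp
    then show ?thesis using x by (intro exI[of _ "inverse x"]) auto
  qed
  then obtain y where y: "y \<noteq> 0" "absv y < 1" by blast
  obtain n where "absv y ^ n < \<delta>" using real_arch_pow_inv[OF assms y(2)] by blast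
  then show ?thesis using y by (intro exI[of _ "y^n"]) (simp add: pow)
qed

lemma unique:
  assumes ec: "entire_coeffs absv c g" and ec': "entire_coeffs absv c' g"
  shows "c = c'"
proof (rule ccontr)
  assume ne: "c \<noteq> c'"
  define e where "e n = c n - c' n" for n
  have hz: "v_tendsto absv (\<lambda>N. \<Sum>n<N. e n * z^n) 0" for z
  proof -
    have h1: "v_tendsto absv (\<lambda>N. \<Sum>k<N. c k * z^k) (g z)" using ec by (simp add: entire_coeffs_def)
    have h2: "v_tendsto absv (\<lambda>N. \<Sum>k<N. c' k * z^k) (g z)" using ec' by (simp add: entire_coeffs_def)
    have "(\<lambda>N. \<Sum>n<N. e n * z^n) = (\<lambda>N. (\<Sum>k<N. c k * z^k) - (\<Sum>k<N. c' k * z^k))"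
      by (simp add: e_def sum_subtractf left_diff_distrib)
    then show ?thesis using tendsto_diff[OF h1 h2] by simp
  qed
  have t1: "(\<lambda>n. absv (c n) * 1^n) \<longlonglongrightarrow> 0" using ec unfolding entire_coeffs_def by (meson zero_less_one)
  have t2: "(\<lambda>n. absv (c' n) * 1^n) \<longlonglongrightarrow> 0" using ec' unfolding entire_coeffs_def by (meson zero_less_one)
  have t: "(\<lambda>n. absv (c n) + absv (c' n)) \<longlonglongrightarrow> 0" using tendsto_add[OF t1 t2] by simp
  have "Bseq (\<lambda>n. absv (c n) + absv (c' n))" using convergent_imp_Bseq[OF convergentI[OF t]] .
  then obtain K where K: "K > 0" "\<And>n. norm (absv (c n) + absv (c' n)) \<le> K" unfolding Bseq_def by blast
  have eK: "absv (e n) \<le> K" for n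
  proof -
    have "absv (e n) \<le> absv (c n) + absv (c' n)"
      using ultra_diff[of "c n" "c' n"] nonneg[of "c n"] nonneg[of "c' n"] unfolding e_def by linarith
    also have "\<dots> \<le> K" using K(2)[of n] by simp
    finally show ?thesis .
  qed
  have "\<exists>n. e n \<noteq> 0" using ne e_def by (auto simp: fun_eq_iff)
  define k where "k = (LEAST n. e n \<noteq> 0)"
  have ek: "e k \<noteq> 0" using LeastI_ex[OF \<open>\<exists>n. e n \<noteq> 0\<close>] k_def by simp
  have below: "e n = 0" if "n < k" for n using not_less_Least[of n "\<lambda>n. e n \<noteq> 0"] that k_def by auto
  have ekp: "absv (e k) > 0" using ek nonneg[of "e k"] zero_iff[of "e k"] by linarith
  obtain z where z: "z \<noteq> 0" "absv z < min 1 (absv (e k) / K)"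
    using small[of "min 1 (absv (e k) / K)"] K ekp by auto
  have zp: "absv z > 0" using z(1) nonneg[of z] zero_iff[of z] by linarith
  have z1: "absv z \<le> 1" using z by simp
  have "absv (1 * (0 - e k * z^k)) \<le> K * absv z ^ Suc k"
  proof (rule lim_bound[OF tendsto_cmult_diff[OF hz[of z], of 1 "e k * z^k"], of "Suc k"])
    fix N assume N: "N \<ge> Suc k"
    have kin: "k \<in> {..<N}" using N by simp
    have "(\<Sum>n<N. e n * z^n) = e k * z^k + (\<Sum>n\<in>{..<N} - {k}. e n * z^n)"
      using sum.remove[OF _ kin] by simp
    then have "1 * ((\<Sum>n<N. e n * z^n) - e k * z^k) = (\<Sum>n\<in>{..<N} - {k}. e n * z^n)" by simp
    moreover have "absv (\<Sum>n\<in>{..<N} - {k}. e n * z^n) \<le> K * absv z ^ Suc k"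
    proof (rule sum_le)
      show "finite ({..<N} - {k})" by simp
      show "0 \<le> K * absv z ^ Suc k" using K by simp
      fix n assume n: "n \<in> {..<N} - {k}"
      show "absv (e n * z^n) \<le> K * absv z ^ Suc k"
      proof (cases "n < k")
        case True then show ?thesis using below K by simp
      next
        case False
        then have "Suc k \<le> n" using n by auto
        then have "absv z ^ n \<le> absv z ^ Suc k" by (rule power_decreasing[OF _ nonneg z1])
        then have "absv (e n) * absv z ^ n \<le> K * absv z ^ Suc k"
          using eK[of n] K(1) by (intro mult_mono) auto
        then show ?thesis by (simp add: mult pow)
      qed
    qed
    ultimately show "absv (1 * ((\<Sum>n<N. e n * z^n) - e k * z^k)) \<le> K * absv z ^ Suc k" by simp
  qed
  then have "absv (e k) * absv z ^ k \<le> (K * absv z) * absv z ^ k" by (simp add: mult pow mult_ac)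
  then have "absv (e k) \<le> K * absv z" using zp by simp
  moreover have "K * absv z < absv (e k)" using z(2) K by (simp add: pos_less_divide_eq mult.commute)
  ultimately show False by simp
qed

lemma mu_eq:
  assumes "entire_coeffs absv c g"
  shows "mu absv g r = Sup (range (\<lambda>n. absv (c n) * r^n))"
proof -
  have "(THE c. entire_coeffs absv c g) = c" using assms unique by blast
  then show ?thesis by (simp add: mu_def)
qed

lemma mu_bounds:
  assumes "entire_coeffs absv c g" "\<And>n. absv (c n) * r^n \<le> B" "r > 0"
  shows "0 \<le> mu absv g r \<and> mu absv g r \<le> B"
proof -
  have bdd: "bdd_above (range (\<lambda>n. absv (c n) * r^n))" using assms(2) by (intro bdd_aboveI2) 
  have "absv (c 0) * r^0 \<le> Sup (range (\<lambda>n. absv (c n) * r^n))"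
    by (rule cSup_upper[OF rangeI bdd])
  moreover have "Sup (range (\<lambda>n. absv (c n) * r^n)) \<le> B"
    using assms(2) by (intro cSup_least) auto
  ultimately show ?thesis using mu_eq[OF assms(1)] by (auto intro: order_trans[OF nonneg])
qed

end



theorem corollary2p2:
  fixes absv :: "'a::field_char_0 \<Rightarrow> real" and a b :: 'a
    and f :: "'a \<Rightarrow> 'a" and m :: nat and r :: real
  assumes "ac_complete_nonarch_field absv"
    and "a \<noteq> 0" and "absv a \<le> 1"
    and "is_entire absv f" and "f \<noteq> (\<lambda>_. 0)"
    and "m > 0"
    and "r > absv b / absv a"
  shows "m_quot absv r (f \<circ> (\<lambda>z. a * z + b)) f = 0
       \<and> m_quot absv r (Delta_pow (\<lambda>z. a * z + b) m f) f = 0"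
proof -
  interpret nacn absv
    using assms(1) unfolding ac_complete_nonarch_field_def
    by unfold_locales auto
  obtain c where ec: "entire_coeffs absv c f" using assms(4) is_entire_def by blast
  have ap: "absv a > 0" using assms(2) nonneg[of a] zero_iff[of a] by linarith
  have r0: "r > 0" using assms(7) ap nonneg[of b] by (smt (verit) divide_nonneg_pos)
  have "absv b < r * absv a" using assms(7) ap by (simp add: divide_less_eq)
  moreover have "r * absv a \<le> r" using assms(3) r0 by (simp add: mult_left_le)
  ultimately have br: "absv b \<le> r" by simp
  define B where "B = mu absv f r"
  have BS: "B = Sup (range (\<lambda>n. absv (c n) * r^n))" using mu_eq[OF ec] B_def by simp
  have u: "(\<lambda>n. absv (c n) * r^n) \<longlonglongrightarrow> 0" by (rule c_tendsto[OF ec]) (use r0 in simp)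
  have bdd: "bdd_above (range (\<lambda>n. absv (c n) * r^n))"
    using Bseq_bdd_above[OF convergent_imp_Bseq[OF convergentI[OF u]]] .
  have cB: "absv (c n) * r^n \<le> B" for n
    unfolding BS by (rule cSup_upper[OF rangeI bdd])
  have "\<exists>n. c n \<noteq> 0"
  proof (rule ccontr)
    assume "\<not> (\<exists>n. c n \<noteq> 0)"
    then have c0: "\<And>n. c n = 0" by simp
    have "f z = 0" for z
    proof -
      have vt: "v_tendsto absv (\<lambda>N. \<Sum>k<N. c k * z^k) (f z)" using ec by (simp add: entire_coeffs_def)
      have "absv (f z) \<le> 0"
      proof (rule lim_bound[OF vt, of 0])
        fix n :: nat
        have "(\<Sum>k<n. c k * z^k) = 0" by (simp add: c0)
        then show "absv (\<Sum>k<n. c k * z^k) \<le> 0" by simp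
      qed
      then show ?thesis using nonneg[of "f z"] zero_iff[of "f z"] by linarith
    qed
    then have "f = (\<lambda>_. 0)" by (rule ext)
    then show False using assms(5) by simp
  qed
  then obtain n0 where "c n0 \<noteq> 0" by blast
  then have "absv (c n0) > 0" using nonneg[of "c n0"] zero_iff[of "c n0"] by linarith
  moreover have "r^n0 > 0" using r0 by simp
  ultimately have "absv (c n0) * r^n0 > 0" by (rule mult_pos_pos)
  then have Bp: "B > 0" using cB[of n0] by linarith
  have fin: "m_quot absv r h f = 0" if "0 \<le> mu absv h r" "mu absv h r \<le> B" for h
  proof -
    have "ln (mu absv h r / mu absv f r) \<le> 0"
    proof (cases "mu absv h r = 0")
      case True then show ?thesis by simp
    next
      case False
      then have "mu absv h r / B > 0" using that Bp by simp
      moreover have "mu absv h r / B \<le> 1" using that Bp by simp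
      ultimately show ?thesis using ln_le_zero_iff B_def by simp
    qed
    then show ?thesis by (simp add: m_quot_def)
  qed
  let ?L = "\<lambda>z. a * z + b"
  have step: "\<exists>d'. entire_coeffs absv d' (\<lambda>z. g (a*z+b)) \<and> (\<forall>k. absv (d' k) * r^k \<le> B)
              \<and> entire_coeffs absv (\<lambda>k. d' k - d k) (Delta ?L g)
              \<and> (\<forall>k. absv (d' k - d k) * r^k \<le> B)"
    if ed: "entire_coeffs absv d g" and dB: "\<And>k. absv (d k) * r^k \<le> B" for d g
  proof -
    obtain d' where d': "entire_coeffs absv d' (\<lambda>z. g (a*z+b))"
      "\<And>k. v_tendsto absv (\<lambda>N. \<Sum>n<N. scoef a b d k n) (d' k)"
      using compose[OF ed, of a b] by blast
    have d'B: "absv (d' k) * r^k \<le> B" for k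
      by (rule coeff_bound[OF assms(3) r0 br dB d'(2)])
    have "absv (d' k - d k) * r^k \<le> B" for k
    proof -
      have "absv (d' k - d k) * r^k \<le> max (absv (d' k)) (absv (d k)) * r^k"
        using ultra_diff r0 by (intro mult_right_mono) auto
      also have "\<dots> \<le> B" using d'B[of k] dB[of k] by (simp add: max_def)
      finally show ?thesis .
    qed
    then show ?thesis using d'(1) d'B delta_coeffs[OF ed d'(1)] by blast
  qed
  have part1: "m_quot absv r (f \<circ> ?L) f = 0"
  proof -
    obtain d' where "entire_coeffs absv d' (\<lambda>z. f (a*z+b))" "\<forall>k. absv (d' k) * r^k \<le> B"
      using step[OF ec cB] by blast
    then have "0 \<le> mu absv (f \<circ> ?L) r \<and> mu absv (f \<circ> ?L) r \<le> B"
      using mu_bounds[of d' "\<lambda>z. f (a*z+b)" r B] r0 by (simp add: comp_def)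
    then show ?thesis using fin by blast
  qed
  have ind: "\<exists>d. entire_coeffs absv d ((Delta ?L ^^ j) f) \<and> (\<forall>k. absv (d k) * r^k \<le> B)" for j
  proof (induction j)
    case 0 then show ?case using ec cB by auto
  next
    case (Suc j)
    then obtain d where "entire_coeffs absv d ((Delta ?L ^^ j) f)" "\<forall>k. absv (d k) * r^k \<le> B" by blast
    then show ?case using step[of d "(Delta ?L ^^ j) f"] by auto
  qed
  obtain d where "entire_coeffs absv d (Delta_pow ?L m f)" "\<forall>k. absv (d k) * r^k \<le> B"
    using ind[of m] by (auto simp: Delta_pow_def)
  then have "0 \<le> mu absv (Delta_pow ?L m f) r \<and> mu absv (Delta_pow ?L m f) r \<le> B"
    using mu_bounds r0 by blast
  then have "m_quot absv r (Delta_pow ?L m f) f = 0" using fin by blast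
  then show ?thesis using part1 by blast
qed


end
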